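(* Let $G$ be a finite group and $N$ a proper normal subgroup of $G$. Then: (1) $\eta(G/N) \le \eta(G)$. (2) $\eta(G/N) = \eta(G)$ if and only if all of the following hold: (a) $N \subseteq G^-$; (b) $(G/N)^- = \{ gN \in G/N : gN \subseteq G^-\}$ (here $gN$ is viewed as a subset of $G$); (c) for every $x \in G \setminus G^-$, every element of $xN \setminus G^-$ is conjugate in $G$ to a generator of $\langle x \rangle$. (3) If $G$ is a $p$-group and $\eta(G/N) = \eta(G)$, then $G^-$ is a union of cosets of $N$. (4) $\eta(G/N) = \eta(G)$ and $G^-$ is a union of cosets of $N$ if and only if for every $x \in G \setminus G^-$, every element of $xN$ is conjugate in $G$ to a generator of $\langle x \rangle$. (5) If $\eta(G/N) = \eta(G)$ and $G^-$ is a union of cosets of $N$, then (a) $G^- N = G^-$ and (b) $(G/N)^- = G^-N/N$.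
   Context: A cyclic subgroup $C$ of a group $G$ is maximal cyclic if there is no cyclic subgroup $D$ of $G$ with $C < D$. $\eta(G)$ denotes the number of conjugacy classes of maximal cyclic subgroups of $G$. For a group $G$, $G^- = \{ g \in G : \langle g \rangle \text{ is not maximal cyclic in } G\}$; similarly $(G/N)^-$ is the set of elements of $G/N$ generating a cyclic subgroup that is not maximal cyclic in $G/N$. For subsets $S,T \subseteq G$, $ST = \{st : s \in S, t \in T\}$, and $SN/N = \{ sN : s \in S\} \subseteq G/N$. *)

theory Defs
  imports "HOL-Algebra.Algebra"
begin

definition cyclic_subgroup :: "('a, 'b) monoid_scheme \<Rightarrow> 'a set \<Rightarrow> bool" where
  "cyclic_subgroup G C \<longleftrightarrow> (\<exists>g \<in> carrier G. C = generate G {g})"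

definition max_cyclic :: "('a, 'b) monoid_scheme \<Rightarrow> 'a set \<Rightarrow> bool" where
  "max_cyclic G C \<longleftrightarrow> cyclic_subgroup G C \<and> \<not> (\<exists>D. cyclic_subgroup G D \<and> C \<subset> D)"

definition subgroup_conj_class :: "('a, 'b) monoid_scheme \<Rightarrow> 'a set \<Rightarrow> 'a set set" where
  "subgroup_conj_class G H = {g <#\<^bsub>G\<^esub> (H #>\<^bsub>G\<^esub> inv\<^bsub>G\<^esub> g) | g. g \<in> carrier G}"

definition eta :: "('a, 'b) monoid_scheme \<Rightarrow> nat" where
  "eta G = card (subgroup_conj_class G ` {C. max_cyclic G C})"

definition minus_set :: "('a, 'b) monoid_scheme \<Rightarrow> 'a set" where
  "minus_set G = {g \<in> carrier G. \<not> max_cyclic G (generate G {g})}"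

definition conjugate_in :: "('a, 'b) monoid_scheme \<Rightarrow> 'a \<Rightarrow> 'a \<Rightarrow> bool" where
  "conjugate_in G y z \<longleftrightarrow> (\<exists>g \<in> carrier G. y = g \<otimes>\<^bsub>G\<^esub> z \<otimes>\<^bsub>G\<^esub> inv\<^bsub>G\<^esub> g)"

definition conj_to_generator :: "('a, 'b) monoid_scheme \<Rightarrow> 'a \<Rightarrow> 'a \<Rightarrow> bool" where
  "conj_to_generator G y x \<longleftrightarrow>
     (\<exists>z \<in> carrier G. generate G {z} = generate G {x} \<and> conjugate_in G y z)"

definition union_of_cosets :: "('a, 'b) monoid_scheme \<Rightarrow> 'a set \<Rightarrow> 'a set \<Rightarrow> bool" where
  "union_of_cosets G N S \<longleftrightarrow> (\<exists>\<C>. \<C> \<subseteq> rcosets\<^bsub>G\<^esub> N \<and> S = \<Union>\<C>)"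

end

theory Submission
  imports Defs
begin

definition cj :: "('a,'b) monoid_scheme \<Rightarrow> 'a \<Rightarrow> 'a set \<Rightarrow> 'a set" where
  "cj H g A = (\<lambda>a. g \<otimes>\<^bsub>H\<^esub> a \<otimes>\<^bsub>H\<^esub> inv\<^bsub>H\<^esub> g) ` A"

context group begin

lemma inv_cancel_l [simp]: "x \<in> carrier G \<Longrightarrow> y \<in> carrier G \<Longrightarrow> inv x \<otimes> (x \<otimes> y) = y"
  by (simp add: m_assoc[symmetric])

lemma cancel_inv_l [simp]: "x \<in> carrier G \<Longrightarrow> y \<in> carrier G \<Longrightarrow> x \<otimes> (inv x \<otimes> y) = y"
  by (simp add: m_assoc[symmetric])

lemma conj_eq_cj: "A \<subseteq> carrier G \<Longrightarrow> g \<in> carrier G \<Longrightarrow> g <# (A #> inv g) = cj G g A"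
  unfolding cj_def l_coset_def r_coset_def by (auto simp: m_assoc subsetD)

lemma cls_eq:
  assumes A: "A \<subseteq> carrier G"
  shows "subgroup_conj_class G A = {cj G g A | g. g \<in> carrier G}"
proof -
  have e: "\<And>g. g \<in> carrier G \<Longrightarrow> g <# (A #> inv g) = cj G g A" using conj_eq_cj[OF A] by blast
  show ?thesis unfolding subgroup_conj_class_def
    by (rule Collect_cong) (metis e)
qed

lemma conj_hom: "g \<in> carrier G \<Longrightarrow> (\<lambda>a. g \<otimes> a \<otimes> inv g) \<in> hom G G"
  unfolding hom_def by (auto simp: m_assoc)

lemma conj_group_hom: "g \<in> carrier G \<Longrightarrow> group_hom G G (\<lambda>a. g \<otimes> a \<otimes> inv g)"
  by (simp add: conj_hom group_hom.intro group_hom_axioms.intro is_group)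

lemma cj_generate: "g \<in> carrier G \<Longrightarrow> x \<in> carrier G \<Longrightarrow>
   cj G g (generate G {x}) = generate G {g \<otimes> x \<otimes> inv g}"
  using group_hom.generate_img[OF conj_group_hom, of g "{x}"] unfolding cj_def by simp

lemma cj_cj: "A \<subseteq> carrier G \<Longrightarrow> g \<in> carrier G \<Longrightarrow> h \<in> carrier G \<Longrightarrow>
   cj G g (cj G h A) = cj G (g \<otimes> h) A"
  unfolding cj_def image_image
proof (rule image_cong[OF refl])
  fix a assume "A \<subseteq> carrier G" "g \<in> carrier G" "h \<in> carrier G" "a \<in> A"
  hence a: "a \<in> carrier G" by auto
  show "g \<otimes> (h \<otimes> a \<otimes> inv h) \<otimes> inv g = g \<otimes> h \<otimes> a \<otimes> inv (g \<otimes> h)"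
    using a \<open>g \<in> carrier G\<close> \<open>h \<in> carrier G\<close> by (simp add: m_assoc inv_mult_group)
qed

lemma cj_one: "A \<subseteq> carrier G \<Longrightarrow> cj G \<one> A = A"
  unfolding cj_def by (auto simp: subsetD)

lemma cj_inv: "A \<subseteq> carrier G \<Longrightarrow> g \<in> carrier G \<Longrightarrow> cj G (inv g) (cj G g A) = A"
  by (simp add: cj_cj cj_one)

lemma cj_carrier: "A \<subseteq> carrier G \<Longrightarrow> g \<in> carrier G \<Longrightarrow> cj G g A \<subseteq> carrier G"
  unfolding cj_def by auto

lemma cyclic_sub: "cyclic_subgroup G C \<Longrightarrow> C \<subseteq> carrier G"
  unfolding cyclic_subgroup_def using generate_incl by blast

lemma cyclic_cj: "cyclic_subgroup G C \<Longrightarrow> g \<in> carrier G \<Longrightarrow> cyclic_subgroup G (cj G g C)"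
  unfolding cyclic_subgroup_def using cj_generate by auto

lemma max_cj:
  assumes "max_cyclic G C" "g \<in> carrier G"
  shows "max_cyclic G (cj G g C)"
proof -
  have cyc: "cyclic_subgroup G C" and nm: "\<And>D. cyclic_subgroup G D \<Longrightarrow> \<not> C \<subset> D"
    using assms(1) unfolding max_cyclic_def by auto
  have Cs: "C \<subseteq> carrier G" using cyc cyclic_sub by auto
  { fix D assume D: "cyclic_subgroup G D" "cj G g C \<subset> D"
    have Ds: "D \<subseteq> carrier G" using D cyclic_sub by auto
    have "cj G (inv g) (cj G g C) \<subseteq> cj G (inv g) D" using D(2) unfolding cj_def by auto
    moreover have "cj G (inv g) (cj G g C) \<noteq> cj G (inv g) D"
    proof
      assume "cj G (inv g) (cj G g C) = cj G (inv g) D"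
      hence "cj G g (cj G (inv g) (cj G g C)) = cj G g (cj G (inv g) D)" by simp
      hence "cj G g C = D" using Cs Ds assms(2)
        by (metis cj_carrier cj_inv inv_closed inv_inv)
      thus False using D(2) by auto
    qed
    ultimately have "C \<subset> cj G (inv g) D" using cj_inv[OF Cs assms(2)] by auto
    moreover have "cyclic_subgroup G (cj G (inv g) D)" using cyclic_cj[OF D(1)] assms(2) by auto
    ultimately have False using nm by auto }
  thus ?thesis unfolding max_cyclic_def using cyclic_cj[OF cyc assms(2)] by auto
qed

lemma cls_eq_iff:
  assumes "A \<subseteq> carrier G" "B \<subseteq> carrier G"
  shows "subgroup_conj_class G A = subgroup_conj_class G B \<longleftrightarrow> (\<exists>g\<in>carrier G. B = cj G g A)"
proof
  assume "subgroup_conj_class G A = subgroup_conj_class G B"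
  moreover have "B \<in> subgroup_conj_class G B"
  proof -
    have "B = cj G \<one> B" using cj_one[OF assms(2)] by simp
    thus ?thesis unfolding cls_eq[OF assms(2)] by blast
  qed
  ultimately have "B \<in> {cj G g A | g. g \<in> carrier G}" using cls_eq[OF assms(1)] by simp
  thus "\<exists>g\<in>carrier G. B = cj G g A" by blast
next
  assume "\<exists>g\<in>carrier G. B = cj G g A"
  then obtain g where g: "g \<in> carrier G" "B = cj G g A" by auto
  show "subgroup_conj_class G A = subgroup_conj_class G B"
    unfolding cls_eq[OF assms(1)] cls_eq[OF assms(2)]
  proof (intro equalityI subsetI)
    fix S0 assume "S0 \<in> {cj G h A |h. h \<in> carrier G}"
    then obtain h where h: "h \<in> carrier G" "S0 = cj G h A" by auto
    have "S0 = cj G (h \<otimes> inv g) B" using g h assms(1) by (simp add: cj_cj m_assoc)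
    thus "S0 \<in> {cj G h B |h. h \<in> carrier G}" using g h by blast
  next
    fix S0 assume "S0 \<in> {cj G h B |h. h \<in> carrier G}"
    then obtain h where h: "h \<in> carrier G" "S0 = cj G h B" by auto
    have "S0 = cj G (h \<otimes> g) A" using g h assms(1) by (simp add: cj_cj)
    thus "S0 \<in> {cj G h A |h. h \<in> carrier G}" using g h by blast
  qed
qed

lemma notminus_iff: "x \<in> carrier G \<Longrightarrow> x \<notin> minus_set G \<longleftrightarrow> max_cyclic G (generate G {x})"
  unfolding minus_set_def by auto

lemma exists_max:
  assumes fin: "finite (carrier G)" and x: "x \<in> carrier G"
  shows "\<exists>y\<in>carrier G. max_cyclic G (generate G {y}) \<and> x \<in> generate G {y}"
proof -
  let ?S = "{D. cyclic_subgroup G D \<and> generate G {x} \<subseteq> D}"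
  have "?S \<subseteq> Pow (carrier G)" using cyclic_sub by auto
  hence finS: "finite ?S" using fin by (meson finite_Pow_iff finite_subset)
  have "generate G {x} \<in> ?S" using x unfolding cyclic_subgroup_def by auto
  hence ne: "?S \<noteq> {}" by blast
  obtain m where m: "m \<in> ?S" "\<And>b. b \<in> ?S \<Longrightarrow> m \<subseteq> b \<Longrightarrow> m = b"
    using finite_has_maximal[OF finS ne] by auto
  from m(1) obtain y where y: "y \<in> carrier G" "m = generate G {y}"
    unfolding cyclic_subgroup_def by auto
  have "max_cyclic G m"
    unfolding max_cyclic_def using m by auto
  moreover have "x \<in> m" using m(1) generate.incl[of x "{x}" G] by auto
  ultimately show ?thesis using y by auto
qed

lemma max_trivial:
  assumes "max_cyclic G (generate G {\<one>})"
  shows "carrier G = {\<one>}"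
proof (rule ccontr)
  assume "carrier G \<noteq> {\<one>}"
  then obtain x where x: "x \<in> carrier G" "x \<noteq> \<one>" by auto
  have "generate G {\<one>} \<subset> generate G {x}"
    using generate_one x generate.one generate.incl[of x "{x}" G] by auto
  moreover have "cyclic_subgroup G (generate G {x})" using x unfolding cyclic_subgroup_def by auto
  ultimately show False using assms unfolding max_cyclic_def by auto
qed

lemma gen_coprime:
  assumes x: "x \<in> carrier G" and cp: "coprime k (int (ord x))"
  shows "generate G {x [^] k} = generate G {x}"
proof
  show "generate G {x [^] k} \<subseteq> generate G {x}"
    using x by (intro generate_subgroup_incl generate_is_subgroup) (auto simp: generate_pow)
next
  obtain u v where uv: "u * k + v * int (ord x) = 1"
    using cp by (metis bezout_int gcd.commute coprime_iff_gcd_eq_1)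
  have "(x [^] k) [^] u = x [^] (u * k)" using x by (simp add: int_pow_pow mult.commute)
  also have "u * k = 1 - v * int (ord x)" using uv by simp
  also have "x [^] (1 - v * int (ord x)) = x"
  proof -
    have "x [^] (v * int (ord x)) = \<one>" using x int_pow_eq_id by simp
    thus ?thesis using x int_pow_diff[of x 1 "v * int (ord x)"] by simp
  qed
  finally have e: "(x [^] k) [^] u = x" .
  have "x \<in> generate G {x [^] k}"
    unfolding generate_pow[OF int_pow_closed[OF x]] using e[symmetric] by blast
  thus "generate G {x} \<subseteq> generate G {x [^] k}"
    using x by (intro generate_subgroup_incl generate_is_subgroup) auto
qed

lemma conj_gen_iff:
  assumes x: "x \<in> carrier G" and y: "y \<in> carrier G"
  shows "conj_to_generator G y x \<longleftrightarrow> (\<exists>g\<in>carrier G. generate G {y} = cj G g (generate G {x}))"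
proof
  assume "conj_to_generator G y x"
  then obtain z g where zg: "z \<in> carrier G" "generate G {z} = generate G {x}" "g \<in> carrier G"
    "y = g \<otimes> z \<otimes> inv g" unfolding conj_to_generator_def conjugate_in_def by auto
  thus "\<exists>g\<in>carrier G. generate G {y} = cj G g (generate G {x})" using cj_generate by metis
next
  assume "\<exists>g\<in>carrier G. generate G {y} = cj G g (generate G {x})"
  then obtain g where g: "g \<in> carrier G" "generate G {y} = cj G g (generate G {x})" by auto
  define z where "z = inv g \<otimes> y \<otimes> inv (inv g)"
  have z: "z \<in> carrier G" using g y z_def by auto
  have "generate G {z} = cj G (inv g) (generate G {y})" using cj_generate[of "inv g" y] g y z_def by simp
  also have "\<dots> = cj G (inv g) (cj G g (generate G {x}))" using g(2) by simp
  also have "\<dots> = generate G {x}" using g(1) x by (intro cj_inv generate_incl) auto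
  finally have "generate G {z} = generate G {x}" .
  moreover have "y = g \<otimes> z \<otimes> inv g" using g y z_def by (simp add: m_assoc)
  ultimately show "conj_to_generator G y x"
    unfolding conj_to_generator_def conjugate_in_def using z g by auto
qed

end
lemma nt_lift:
  fixes j m n :: int
  assumes n: "n > 0" and mn: "m dvd n" and cp: "coprime j m"
  shows "\<exists>j'. m dvd (j' - j) \<and> coprime j' n"
proof -
  define D where "D = {d::int. 0 < d \<and> d dvd n \<and> coprime d j}"
  have finD: "finite D"
  proof -
    have "D \<subseteq> {0..n}" unfolding D_def using n by (auto intro: zdvd_imp_le)
    thus ?thesis using finite_subset by blast
  qed
  have "1 \<in> D" unfolding D_def using n by auto
  define d where "d = Max D"
  have dD: "d \<in> D" unfolding d_def using finD \<open>1 \<in> D\<close> by (intro Max_in) auto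
  have dmax: "\<And>e. e \<in> D \<Longrightarrow> e \<le> d" unfolding d_def using finD by auto
  have key: "p dvd d" if p: "Factorial_Ring.prime p" "p dvd n" "\<not> p dvd j" for p
  proof (rule ccontr)
    assume np: "\<not> p dvd d"
    have "coprime p d" using p(1) np by (rule prime_imp_coprime)
    hence "p * d dvd n" using p(2) dD unfolding D_def by (auto intro: divides_mult)
    moreover have "coprime (p * d) j" using prime_imp_coprime[OF p(1) p(3)] dD unfolding D_def by auto
    moreover have "p * d > d" using prime_gt_1_int[OF p(1)] dD unfolding D_def by auto
    moreover have "p * d > 0" using prime_gt_1_int[OF p(1)] dD unfolding D_def by auto
    ultimately have "p * d \<in> D" unfolding D_def by auto
    thus False using dmax \<open>p * d > d\<close> by force
  qed
  define j' where "j' = j + m * d"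
  have "coprime j' n"
  proof (rule ccontr)
    assume "\<not> coprime j' n"
    then obtain p where p: "Factorial_Ring.prime p" "p dvd j'" "p dvd n"
    proof -
      have "gcd j' n \<noteq> 0" using n by auto
      moreover have "\<not> is_unit (gcd j' n)" using \<open>\<not> coprime j' n\<close> by (simp add: coprime_iff_gcd_eq_1)
      ultimately obtain p where "p dvd gcd j' n" "Factorial_Ring.prime p" using prime_divisor_exists by blast
      thus ?thesis using that by auto
    qed
    show False
    proof (cases "p dvd j")
      case True
      have "\<not> p dvd m" using True cp p(1) by (meson coprime_common_divisor not_prime_unit)
      moreover have "\<not> p dvd d"
      proof -
        have "coprime d j" using dD unfolding D_def by auto
        thus ?thesis using True p(1) coprime_common_divisor not_prime_unit by blast
      qed
      ultimately have "\<not> p dvd m * d" using p(1) prime_dvd_mult_iff by blast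
      moreover have "p dvd m * d" using p(2) True unfolding j'_def by (simp add: dvd_add_right_iff)
      ultimately show False by blast
    next
      case False
      have "p dvd d" using key[OF p(1) p(3) False] .
      hence "p dvd m * d" by simp
      hence "p dvd j" using p(2) unfolding j'_def by (simp add: dvd_add_left_iff)
      thus False using False by blast
    qed
  qed
  moreover have "m dvd (j' - j)" unfolding j'_def by simp
  ultimately show ?thesis by blast
qed

context normal begin

lemma Q_group: "group (G Mod H)" by (rule factorgroup_is_group)

lemma pi_ghom: "group_hom G (G Mod H) (\<lambda>a. H #> a)"
  unfolding group_hom_def group_hom_axioms_def
  using r_coset_hom_Mod factorgroup_is_group is_group by blast

lemma pi_gen: "x \<in> carrier G \<Longrightarrow> (\<lambda>a. H #> a) ` generate G {x} = generate (G Mod H) {H #> x}"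
  using group_hom.generate_img[OF pi_ghom, of "{x}"] by simp

lemma pi_mult: "x \<in> carrier G \<Longrightarrow> y \<in> carrier G \<Longrightarrow> H #> (x \<otimes> y) = (H #> x) \<otimes>\<^bsub>G Mod H\<^esub> (H #> y)"
  using group_hom.hom_mult[OF pi_ghom] by simp

lemma pi_inv: "x \<in> carrier G \<Longrightarrow> H #> (inv x) = inv\<^bsub>G Mod H\<^esub> (H #> x)"
  using group_hom.hom_inv[OF pi_ghom] by simp

lemma pi_pow: "x \<in> carrier G \<Longrightarrow> H #> (x [^] (k::int)) = (H #> x) [^]\<^bsub>G Mod H\<^esub> k"
  using group_hom.hom_int_pow[OF pi_ghom] by simp

lemma pi_carrier: "x \<in> carrier G \<Longrightarrow> H #> x \<in> carrier (G Mod H)"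
  unfolding carrier_FactGroup by auto

lemma pi_cj:
  assumes "A \<subseteq> carrier G" "g \<in> carrier G"
  shows "(\<lambda>a. H #> a) ` cj G g A = cj (G Mod H) (H #> g) ((\<lambda>a. H #> a) ` A)"
  unfolding cj_def image_image
proof (rule image_cong[OF refl])
  fix a assume "a \<in> A"
  hence a: "a \<in> carrier G" using assms by auto
  show "H #> (g \<otimes> a \<otimes> inv g) = (H #> g) \<otimes>\<^bsub>G Mod H\<^esub> (H #> a) \<otimes>\<^bsub>G Mod H\<^esub> inv\<^bsub>G Mod H\<^esub> (H #> g)"
  proof -
    have "H #> (g \<otimes> a \<otimes> inv g) = (H #> (g \<otimes> a)) \<otimes>\<^bsub>G Mod H\<^esub> (H #> inv g)"
      using a assms(2) by (intro pi_mult) auto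
    also have "H #> (g \<otimes> a) = (H #> g) \<otimes>\<^bsub>G Mod H\<^esub> (H #> a)" using a assms(2) by (intro pi_mult) auto
    also have "H #> inv g = inv\<^bsub>G Mod H\<^esub> (H #> g)" using assms(2) by (intro pi_inv)
    finally show ?thesis .
  qed
qed

lemma lcos_eq: "x \<in> carrier G \<Longrightarrow> x <# H = H #> x"
  using coset_eq by auto

lemma pi_eq_iff: "x \<in> carrier G \<Longrightarrow> y \<in> carrier G \<Longrightarrow> (H #> x = H #> y) \<longleftrightarrow> y \<in> H #> x"
  using repr_independence repr_independenceD subgroup_axioms by metis

lemma pi_one_iff: "x \<in> carrier G \<Longrightarrow> (H #> x = H) \<longleftrightarrow> x \<in> H"
  by (metis coset_join2 rcos_self subgroup_axioms)

lemma mem_own_coset: "x \<in> carrier G \<Longrightarrow> x \<in> H #> x"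
  by (simp add: rcos_self subgroup_axioms)

lemma coset_sub: "x \<in> carrier G \<Longrightarrow> H #> x \<subseteq> carrier G"
  by (simp add: r_coset_subset_G subset)

lemma lemma_G:
  assumes fin: "finite (carrier G)" and y: "y \<in> carrier G" and Xc: "Xc \<in> carrier (G Mod H)"
    and eq: "generate (G Mod H) {Xc} = generate (G Mod H) {H #> y}"
  shows "\<exists>z\<in>carrier G. generate G {z} = generate G {y} \<and> H #> z = Xc"
proof -
  interpret Q: group "G Mod H" by (rule Q_group)
  have "Xc \<in> generate (G Mod H) {H #> y}" using eq generate.incl[of Xc "{Xc}" "G Mod H"] by auto
  then obtain j where j: "Xc = (H #> y) [^]\<^bsub>G Mod H\<^esub> (j::int)"
    using Q.generate_pow[OF pi_carrier[OF y]] by auto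
  hence Xcj: "Xc = H #> (y [^] j)" using pi_pow[OF y] by simp
  have "H #> y \<in> generate (G Mod H) {Xc}" using eq generate.incl[of "H #> y" "{H #> y}" "G Mod H"] by auto
  then obtain i where i: "H #> y = Xc [^]\<^bsub>G Mod H\<^esub> (i::int)"
    using Q.generate_pow[OF Xc] by auto
  hence "H #> y = H #> ((y [^] j) [^] i)" using Xcj pi_pow[of "y [^] j" i] y by simp
  also have "(y [^] j) [^] i = y [^] (j * i)" using y by (simp add: int_pow_pow)
  finally have "y [^] (j * i) \<in> H #> y" using pi_eq_iff y by auto
  hence "y [^] (j * i) \<otimes> inv y \<in> H" using rcos_module_imp[OF is_group y] by blast
  moreover have "y [^] (j * i) \<otimes> inv y = y [^] (j * i - 1)" using y int_pow_diff[of y "j*i" 1] by simp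
  ultimately have h1: "y [^] (j * i - 1) \<in> H" by simp
  define n where "n = int (ord y)"
  have npos: "n > 0" using ord_ge_1[OF fin y] n_def by simp
  have yn: "y [^] n = \<one>" using int_pow_eq_id[OF y] n_def by simp
  define m where "m = gcd n (j * i - 1)"
  obtain u v where uv: "u * n + v * (j * i - 1) = m" using bezout_int[of n "j * i - 1"] m_def by auto
  have ym: "y [^] m \<in> H"
  proof -
    have "y [^] m = y [^] (u * n) \<otimes> y [^] (v * (j * i - 1))" using uv y int_pow_mult by metis
    also have "y [^] (u * n) = \<one>" using yn y by (simp add: int_pow_pow[symmetric] mult.commute)
    also have "y [^] (v * (j * i - 1)) = (y [^] (j * i - 1)) [^] v" using y by (simp add: int_pow_pow mult.commute)
    finally have "y [^] m = (y [^] (j * i - 1)) [^] v" using y by simp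
    thus ?thesis using h1 subgroup_int_pow_closed[OF subgroup_axioms] by simp
  qed
  have mn: "m dvd n" unfolding m_def by simp
  have cp: "coprime j m"
  proof -
    have md: "m dvd j * i - 1" unfolding m_def by simp
    show ?thesis
    proof (rule coprimeI)
      fix c assume c: "c dvd j" "c dvd m"
      have "c dvd j * i" using c(1) by simp
      moreover have "c dvd j * i - 1" using c(2) md dvd_trans by blast
      ultimately have "c dvd (j * i) - (j * i - 1)" by (rule dvd_diff)
      thus "is_unit c" by simp
    qed
  qed
  obtain j' where j': "m dvd (j' - j)" "coprime j' n" using nt_lift[OF npos mn cp] by blast
  then obtain t where t: "j' - j = m * t" by (auto elim: dvdE)
  define z where "z = y [^] j'"
  have z: "z \<in> carrier G" using y z_def by simp
  have "z \<otimes> inv (y [^] j) = y [^] (j' - j)" using y z_def int_pow_diff by simp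
  also have "\<dots> = (y [^] m) [^] t" using t y by (simp add: int_pow_pow)
  finally have "z \<otimes> inv (y [^] j) \<in> H" using ym subgroup_int_pow_closed[OF subgroup_axioms] by simp
  hence "z \<in> H #> (y [^] j)" using rcos_module_rev[OF is_group _ z] y by simp
  hence "H #> z = Xc" using Xcj pi_eq_iff[of "y [^] j" z] y z by simp
  moreover have "generate G {z} = generate G {y}" using gen_coprime[OF y] j'(2) n_def z_def by simp
  ultimately show ?thesis using z by blast
qed

end
context group begin

lemma max_gen_iff: "max_cyclic G C \<longleftrightarrow> (\<exists>x\<in>carrier G. x \<notin> minus_set G \<and> C = generate G {x})"
proof
  assume C: "max_cyclic G C"
  then obtain x where x: "x \<in> carrier G" "C = generate G {x}"
    unfolding max_cyclic_def cyclic_subgroup_def by auto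
  thus "\<exists>x\<in>carrier G. x \<notin> minus_set G \<and> C = generate G {x}" using C notminus_iff by auto
next
  assume "\<exists>x\<in>carrier G. x \<notin> minus_set G \<and> C = generate G {x}"
  thus "max_cyclic G C" using notminus_iff by auto
qed

lemma cls_eq_img: "A \<subseteq> carrier G \<Longrightarrow> subgroup_conj_class G A = (\<lambda>g. cj G g A) ` carrier G"
  using cls_eq by auto

end

context normal begin

lemma lift_max:
  assumes fin: "finite (carrier G)" and D: "max_cyclic (G Mod H) D"
  shows "\<exists>x\<in>carrier G. x \<notin> minus_set G \<and> D = (\<lambda>a. H #> a) ` generate G {x}"
proof -
  interpret Q: group "G Mod H" by (rule Q_group)
  obtain Xc where Xc: "Xc \<in> carrier (G Mod H)" "D = generate (G Mod H) {Xc}"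
    using D unfolding max_cyclic_def cyclic_subgroup_def by auto
  obtain g where g: "g \<in> carrier G" "Xc = H #> g" using Xc(1) unfolding carrier_FactGroup by auto
  obtain y where y: "y \<in> carrier G" "max_cyclic G (generate G {y})" "g \<in> generate G {y}"
    using exists_max[OF fin g(1)] by auto
  have "generate G {g} \<subseteq> generate G {y}"
    using y by (intro generate_subgroup_incl generate_is_subgroup) auto
  hence "(\<lambda>a. H #> a) ` generate G {g} \<subseteq> (\<lambda>a. H #> a) ` generate G {y}" by (rule image_mono)
  moreover have "D = (\<lambda>a. H #> a) ` generate G {g}" using pi_gen[OF g(1)] g Xc by simp
  ultimately have sub: "D \<subseteq> (\<lambda>a. H #> a) ` generate G {y}" by simp
  have "cyclic_subgroup (G Mod H) ((\<lambda>a. H #> a) ` generate G {y})"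
    using pi_gen[OF y(1)] pi_carrier[OF y(1)] unfolding cyclic_subgroup_def by auto
  hence "D = (\<lambda>a. H #> a) ` generate G {y}" using D sub unfolding max_cyclic_def by blast
  thus ?thesis using y notminus_iff by auto
qed

lemma eta_count:
  assumes fin: "finite (carrier G)"
  shows "eta (G Mod H) \<le> eta G \<and>
    (eta (G Mod H) = eta G \<longleftrightarrow>
      (\<forall>x\<in>carrier G. x \<notin> minus_set G \<longrightarrow> H #> x \<notin> minus_set (G Mod H)) \<and>
      (\<forall>x\<in>carrier G. \<forall>y\<in>carrier G. x \<notin> minus_set G \<longrightarrow> y \<notin> minus_set G \<longrightarrow>
         subgroup_conj_class (G Mod H) (generate (G Mod H) {H #> x}) =
           subgroup_conj_class (G Mod H) (generate (G Mod H) {H #> y}) \<longrightarrow>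
         subgroup_conj_class G (generate G {x}) = subgroup_conj_class G (generate G {y})))"
proof -
  interpret Q: group "G Mod H" by (rule Q_group)
  define pr where "pr = (\<lambda>a. H #> a)"
  define F where "F = (\<lambda>K. (\<lambda>C. pr ` C) ` K)"
  define A where "A = subgroup_conj_class G ` {C. max_cyclic G C}"
  define B where "B = subgroup_conj_class (G Mod H) ` {D. max_cyclic (G Mod H) D}"
  have etaG: "eta G = card A" unfolding eta_def A_def ..
  have etaQ: "eta (G Mod H) = card B" unfolding eta_def B_def ..
  have finA: "finite A"
  proof -
    have "{C. max_cyclic G C} \<subseteq> Pow (carrier G)" using cyclic_sub unfolding max_cyclic_def by auto
    moreover have "finite (Pow (carrier G))" using fin by simp
    ultimately have "finite {C. max_cyclic G C}" by (rule finite_subset)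
    thus ?thesis unfolding A_def by simp
  qed
  have Fcls: "F (subgroup_conj_class G C) = subgroup_conj_class (G Mod H) (pr ` C)"
    if C: "C \<subseteq> carrier G" for C
  proof -
    have prC: "pr ` C \<subseteq> carrier (G Mod H)" using C pi_carrier unfolding pr_def by auto
    have "F (subgroup_conj_class G C) = (\<lambda>g. pr ` cj G g C) ` carrier G"
      unfolding F_def cls_eq_img[OF C] image_image ..
    also have "\<dots> = (\<lambda>g. cj (G Mod H) (pr g) (pr ` C)) ` carrier G"
      using pi_cj[OF C] unfolding pr_def by (intro image_cong refl) auto
    also have "\<dots> = (\<lambda>Xc. cj (G Mod H) Xc (pr ` C)) ` (pr ` carrier G)"
      by (simp add: image_image)
    also have "pr ` carrier G = carrier (G Mod H)" unfolding pr_def carrier_FactGroup ..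
    also have "(\<lambda>Xc. cj (G Mod H) Xc (pr ` C)) ` carrier (G Mod H) = subgroup_conj_class (G Mod H) (pr ` C)"
      using Q.cls_eq_img[OF prC] by simp
    finally show ?thesis .
  qed
  have inB: "subgroup_conj_class (G Mod H) D \<in> B \<longleftrightarrow> max_cyclic (G Mod H) D"
    if D: "D \<subseteq> carrier (G Mod H)" for D
  proof
    assume "subgroup_conj_class (G Mod H) D \<in> B"
    then obtain D' where D': "max_cyclic (G Mod H) D'"
      "subgroup_conj_class (G Mod H) D = subgroup_conj_class (G Mod H) D'" unfolding B_def by auto
    have D's: "D' \<subseteq> carrier (G Mod H)" using D'(1) Q.cyclic_sub unfolding max_cyclic_def by auto
    obtain g where "g \<in> carrier (G Mod H)" "D = cj (G Mod H) g D'"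
      using Q.cls_eq_iff[OF D's D] D'(2) by auto
    thus "max_cyclic (G Mod H) D" using Q.max_cj[OF D'(1)] by simp
  next
    assume "max_cyclic (G Mod H) D"
    thus "subgroup_conj_class (G Mod H) D \<in> B" unfolding B_def by auto
  qed
  have FA: "F (subgroup_conj_class G (generate G {x})) =
      subgroup_conj_class (G Mod H) (generate (G Mod H) {H #> x})" if x: "x \<in> carrier G" for x
  proof -
    have "generate G {x} \<subseteq> carrier G" using x generate_incl by auto
    thus ?thesis using Fcls pi_gen[OF x] unfolding pr_def by simp
  qed
  have Aeq: "A = (\<lambda>x. subgroup_conj_class G (generate G {x})) ` (carrier G - minus_set G)"
    unfolding A_def using max_gen_iff by auto
  have BFA: "B \<subseteq> F ` A"
  proof
    fix K assume "K \<in> B"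
    then obtain D where D: "max_cyclic (G Mod H) D" "K = subgroup_conj_class (G Mod H) D"
      unfolding B_def by auto
    obtain x where x: "x \<in> carrier G" "x \<notin> minus_set G" "D = pr ` generate G {x}"
      using lift_max[OF fin D(1)] unfolding pr_def by auto
    have "K = F (subgroup_conj_class G (generate G {x}))" using FA[OF x(1)] x D pi_gen unfolding pr_def by simp
    moreover have "subgroup_conj_class G (generate G {x}) \<in> A" using Aeq x by auto
    ultimately show "K \<in> F ` A" by auto
  qed
  have le1: "card B \<le> card (F ` A)" using BFA finA by (intro card_mono) auto
  have le2: "card (F ` A) \<le> card A" using card_image_le[OF finA] .
  have E1iff: "F ` A \<subseteq> B \<longleftrightarrow> (\<forall>x\<in>carrier G. x \<notin> minus_set G \<longrightarrow> H #> x \<notin> minus_set (G Mod H))"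
  proof -
    have "F ` A \<subseteq> B \<longleftrightarrow> (\<forall>x\<in>carrier G - minus_set G. F (subgroup_conj_class G (generate G {x})) \<in> B)"
      unfolding Aeq by auto
    also have "\<dots> \<longleftrightarrow> (\<forall>x\<in>carrier G - minus_set G. max_cyclic (G Mod H) (generate (G Mod H) {H #> x}))"
    proof -
      have "\<And>x. x \<in> carrier G \<Longrightarrow> F (subgroup_conj_class G (generate G {x})) \<in> B \<longleftrightarrow>
           max_cyclic (G Mod H) (generate (G Mod H) {H #> x})"
        using FA inB Q.generate_incl pi_carrier by auto
      thus ?thesis by auto
    qed
    also have "\<dots> \<longleftrightarrow> (\<forall>x\<in>carrier G. x \<notin> minus_set G \<longrightarrow> H #> x \<notin> minus_set (G Mod H))"
      using Q.notminus_iff pi_carrier by auto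
    finally show ?thesis .
  qed
  have E2iff: "inj_on F A \<longleftrightarrow> (\<forall>x\<in>carrier G. \<forall>y\<in>carrier G. x \<notin> minus_set G \<longrightarrow> y \<notin> minus_set G \<longrightarrow>
         subgroup_conj_class (G Mod H) (generate (G Mod H) {H #> x}) =
           subgroup_conj_class (G Mod H) (generate (G Mod H) {H #> y}) \<longrightarrow>
         subgroup_conj_class G (generate G {x}) = subgroup_conj_class G (generate G {y}))"
  proof
    assume inj: "inj_on F A"
    show "\<forall>x\<in>carrier G. \<forall>y\<in>carrier G. x \<notin> minus_set G \<longrightarrow> y \<notin> minus_set G \<longrightarrow>
         subgroup_conj_class (G Mod H) (generate (G Mod H) {H #> x}) =
           subgroup_conj_class (G Mod H) (generate (G Mod H) {H #> y}) \<longrightarrow>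
         subgroup_conj_class G (generate G {x}) = subgroup_conj_class G (generate G {y})"
    proof (intro ballI impI)
      fix x y assume xy: "x \<in> carrier G" "y \<in> carrier G" "x \<notin> minus_set G" "y \<notin> minus_set G"
        and eqQ: "subgroup_conj_class (G Mod H) (generate (G Mod H) {H #> x}) =
           subgroup_conj_class (G Mod H) (generate (G Mod H) {H #> y})"
      have "F (subgroup_conj_class G (generate G {x})) = F (subgroup_conj_class G (generate G {y}))"
        using FA[OF xy(1)] FA[OF xy(2)] eqQ by simp
      moreover have "subgroup_conj_class G (generate G {x}) \<in> A" "subgroup_conj_class G (generate G {y}) \<in> A"
        using Aeq xy by auto
      ultimately show "subgroup_conj_class G (generate G {x}) = subgroup_conj_class G (generate G {y})"
        by (rule inj_onD[OF inj])
    qed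
  next
    assume E2: "\<forall>x\<in>carrier G. \<forall>y\<in>carrier G. x \<notin> minus_set G \<longrightarrow> y \<notin> minus_set G \<longrightarrow>
         subgroup_conj_class (G Mod H) (generate (G Mod H) {H #> x}) =
           subgroup_conj_class (G Mod H) (generate (G Mod H) {H #> y}) \<longrightarrow>
         subgroup_conj_class G (generate G {x}) = subgroup_conj_class G (generate G {y})"
    show "inj_on F A"
    proof (rule inj_onI)
      fix K1 K2 assume K: "K1 \<in> A" "K2 \<in> A" "F K1 = F K2"
      obtain x where x: "x \<in> carrier G" "x \<notin> minus_set G" "K1 = subgroup_conj_class G (generate G {x})"
        using K(1) Aeq by auto
      obtain y where y: "y \<in> carrier G" "y \<notin> minus_set G" "K2 = subgroup_conj_class G (generate G {y})"
        using K(2) Aeq by auto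
      have "subgroup_conj_class (G Mod H) (generate (G Mod H) {H #> x}) =
           subgroup_conj_class (G Mod H) (generate (G Mod H) {H #> y})"
        using K(3) FA[OF x(1)] FA[OF y(1)] x(3) y(3) by simp
      thus "K1 = K2" using E2 x y by blast
    qed
  qed
  have "eta (G Mod H) = eta G \<longleftrightarrow> F ` A \<subseteq> B \<and> inj_on F A"
  proof
    assume eq: "eta (G Mod H) = eta G"
    hence c1: "card B = card (F ` A)" "card (F ` A) = card A" using le1 le2 etaG etaQ by auto
    have "B = F ` A" using card_subset_eq[OF _ BFA c1(1)] finA by auto
    moreover have "inj_on F A" using eq_card_imp_inj_on[OF finA c1(2)] .
    ultimately show "F ` A \<subseteq> B \<and> inj_on F A" by auto
  next
    assume "F ` A \<subseteq> B \<and> inj_on F A"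
    hence "B = F ` A" "card (F ` A) = card A" using BFA card_image by auto
    thus "eta (G Mod H) = eta G" using etaG etaQ by simp
  qed
  thus ?thesis using le1 le2 etaG etaQ E1iff E2iff by auto
qed

end

context group begin

lemma cg_iff:
  assumes x: "x \<in> carrier G" and y: "y \<in> carrier G"
  shows "conj_to_generator G y x \<longleftrightarrow>
    subgroup_conj_class G (generate G {x}) = subgroup_conj_class G (generate G {y})"
proof -
  have gx: "generate G {x} \<subseteq> carrier G" using x generate_incl by auto
  have gy: "generate G {y} \<subseteq> carrier G" using y generate_incl by auto
  show ?thesis using conj_gen_iff[OF x y] cls_eq_iff[OF gx gy] by simp
qed

lemma notminus_conj:
  assumes x: "x \<in> carrier G" "x \<notin> minus_set G" and y: "y \<in> carrier G"
    and c: "conj_to_generator G y x"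
  shows "y \<notin> minus_set G"
proof -
  obtain g where g: "g \<in> carrier G" "generate G {y} = cj G g (generate G {x})"
    using conj_gen_iff[OF x(1) y] c by auto
  have "max_cyclic G (generate G {x})" using x notminus_iff by auto
  hence "max_cyclic G (generate G {y})" using max_cj g by simp
  thus ?thesis using notminus_iff y by simp
qed

end

context normal begin

lemma uc_iff: "union_of_cosets G H S \<longleftrightarrow> S \<subseteq> carrier G \<and> (\<forall>x\<in>S. x <# H \<subseteq> S)"
proof
  assume "union_of_cosets G H S"
  then obtain CC where CC: "CC \<subseteq> rcosets H" "S = \<Union>CC" unfolding union_of_cosets_def by auto
  have "S \<subseteq> carrier G" using CC coset_sub unfolding RCOSETS_def by blast
  moreover have "x <# H \<subseteq> S" if xS: "x \<in> S" for x
  proof -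
    obtain c where c: "c \<in> CC" "x \<in> c" using xS CC by auto
    obtain a where a: "a \<in> carrier G" "c = H #> a" using c CC unfolding RCOSETS_def by auto
    have x: "x \<in> carrier G" using a c coset_sub by auto
    have "x <# H = H #> x" using lcos_eq[OF x] .
    also have "\<dots> = H #> a" using pi_eq_iff[OF a(1) x] a c by simp
    finally show ?thesis using a c CC by auto
  qed
  ultimately show "S \<subseteq> carrier G \<and> (\<forall>x\<in>S. x <# H \<subseteq> S)" by auto
next
  assume S: "S \<subseteq> carrier G \<and> (\<forall>x\<in>S. x <# H \<subseteq> S)"
  define CC where "CC = (\<lambda>x. H #> x) ` S"
  have "CC \<subseteq> rcosets H" unfolding CC_def RCOSETS_def using S by auto
  moreover have "S = \<Union>CC"
  proof
    show "S \<subseteq> \<Union>CC" unfolding CC_def using S mem_own_coset by blast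
    show "\<Union>CC \<subseteq> S"
    proof
      fix z assume "z \<in> \<Union>CC"
      then obtain x where x: "x \<in> S" "z \<in> H #> x" unfolding CC_def by auto
      have "x \<in> carrier G" using x S by auto
      hence "z \<in> x <# H" using x lcos_eq by simp
      thus "z \<in> S" using x S by auto
    qed
  qed
  ultimately show "union_of_cosets G H S" unfolding union_of_cosets_def by auto
qed

context
  assumes fin: "finite (carrier G)" and hprop: "H \<noteq> carrier G"
begin

lemma Q_nontriv: "\<not> max_cyclic (G Mod H) (generate (G Mod H) {H})"
proof
  interpret Q: group "G Mod H" by (rule Q_group)
  assume "max_cyclic (G Mod H) (generate (G Mod H) {H})"
  hence cQ: "carrier (G Mod H) = {H}" using Q.max_trivial by simp
  obtain g where g: "g \<in> carrier G" "g \<notin> H" using hprop subgroup.subset[OF subgroup_axioms] by auto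
  have "H #> g \<in> carrier (G Mod H)" using pi_carrier g by auto
  moreover have "H #> g \<noteq> H" using pi_one_iff g by auto
  ultimately show False using cQ by auto
qed

lemma lemB:
  assumes Xc: "Xc \<in> carrier (G Mod H)" "Xc \<notin> minus_set (G Mod H)"
  shows "\<exists>z\<in>Xc. z \<notin> minus_set G"
proof -
  interpret Q: group "G Mod H" by (rule Q_group)
  have mx: "max_cyclic (G Mod H) (generate (G Mod H) {Xc})" using Q.notminus_iff Xc by auto
  obtain x where x: "x \<in> carrier G" "x \<notin> minus_set G" "generate (G Mod H) {Xc} = (\<lambda>a. H #> a) ` generate G {x}"
    using lift_max[OF fin mx] by auto
  have "generate (G Mod H) {Xc} = generate (G Mod H) {H #> x}" using x pi_gen by simp
  then obtain z where z: "z \<in> carrier G" "generate G {z} = generate G {x}" "H #> z = Xc"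
    using lemma_G[OF fin x(1) Xc(1)] by auto
  have "z \<notin> minus_set G" using notminus_iff z x by simp
  moreover have "z \<in> Xc" using mem_own_coset z by auto
  ultimately show ?thesis by auto
qed

lemma b_iff: "minus_set (G Mod H) = {gN \<in> carrier (G Mod H). gN \<subseteq> minus_set G} \<longleftrightarrow>
   (\<forall>x\<in>carrier G. x \<notin> minus_set G \<longrightarrow> H #> x \<notin> minus_set (G Mod H))"
proof
  assume b: "minus_set (G Mod H) = {gN \<in> carrier (G Mod H). gN \<subseteq> minus_set G}"
  show "\<forall>x\<in>carrier G. x \<notin> minus_set G \<longrightarrow> H #> x \<notin> minus_set (G Mod H)"
  proof (intro ballI impI)
    fix x assume x: "x \<in> carrier G" "x \<notin> minus_set G"
    have "\<not> (H #> x \<subseteq> minus_set G)" using mem_own_coset x by auto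
    thus "H #> x \<notin> minus_set (G Mod H)" using b by auto
  qed
next
  assume E1: "\<forall>x\<in>carrier G. x \<notin> minus_set G \<longrightarrow> H #> x \<notin> minus_set (G Mod H)"
  show "minus_set (G Mod H) = {gN \<in> carrier (G Mod H). gN \<subseteq> minus_set G}"
  proof (intro equalityI subsetI)
    fix Xc assume Xc: "Xc \<in> minus_set (G Mod H)"
    hence XcC: "Xc \<in> carrier (G Mod H)" unfolding minus_set_def by auto
    then obtain g where g: "g \<in> carrier G" "Xc = H #> g" unfolding carrier_FactGroup by auto
    have "Xc \<subseteq> minus_set G"
    proof
      fix y assume y: "y \<in> Xc"
      have yc: "y \<in> carrier G" using y g coset_sub by auto
      have yX: "H #> y = Xc" using pi_eq_iff[OF g(1) yc] y g by simp
      show "y \<in> minus_set G"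
      proof (rule ccontr)
        assume "y \<notin> minus_set G" thus False using E1 yc Xc yX by auto
      qed
    qed
    thus "Xc \<in> {gN \<in> carrier (G Mod H). gN \<subseteq> minus_set G}" using XcC by auto
  next
    fix Xc assume "Xc \<in> {gN \<in> carrier (G Mod H). gN \<subseteq> minus_set G}"
    hence Xc: "Xc \<in> carrier (G Mod H)" "Xc \<subseteq> minus_set G" by auto
    show "Xc \<in> minus_set (G Mod H)"
    proof (rule ccontr)
      assume "Xc \<notin> minus_set (G Mod H)"
      then obtain z where "z \<in> Xc" "z \<notin> minus_set G" using lemB Xc(1) by auto
      thus False using Xc(2) by auto
    qed
  qed
qed

lemma a_of_E1:
  assumes E1: "\<forall>x\<in>carrier G. x \<notin> minus_set G \<longrightarrow> H #> x \<notin> minus_set (G Mod H)"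
  shows "H \<subseteq> minus_set G"
proof
  interpret Q: group "G Mod H" by (rule Q_group)
  fix n assume n: "n \<in> H"
  have nc: "n \<in> carrier G" using n subgroup.subset[OF subgroup_axioms] by auto
  show "n \<in> minus_set G"
  proof (rule ccontr)
    assume "n \<notin> minus_set G"
    hence "H #> n \<notin> minus_set (G Mod H)" using E1 nc by auto
    moreover have "H #> n = H" using pi_one_iff nc n by simp
    ultimately have "max_cyclic (G Mod H) (generate (G Mod H) {H})"
      using Q.notminus_iff[of H] Q.one_closed by simp
    thus False using Q_nontriv by simp
  qed
qed


lemma part2:
  "eta (G Mod H) = eta G \<longleftrightarrow>
     (H \<subseteq> minus_set G
      \<and> minus_set (G Mod H) = {gN \<in> carrier (G Mod H). gN \<subseteq> minus_set G}
      \<and> (\<forall>x \<in> carrier G - minus_set G. \<forall>y \<in> (x <# H) - minus_set G. conj_to_generator G y x))"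
proof -
  interpret Q: group "G Mod H" by (rule Q_group)
  have cnt: "eta (G Mod H) = eta G \<longleftrightarrow>
      (\<forall>x\<in>carrier G. x \<notin> minus_set G \<longrightarrow> H #> x \<notin> minus_set (G Mod H)) \<and>
      (\<forall>x\<in>carrier G. \<forall>y\<in>carrier G. x \<notin> minus_set G \<longrightarrow> y \<notin> minus_set G \<longrightarrow>
         subgroup_conj_class (G Mod H) (generate (G Mod H) {H #> x}) =
           subgroup_conj_class (G Mod H) (generate (G Mod H) {H #> y}) \<longrightarrow>
         subgroup_conj_class G (generate G {x}) = subgroup_conj_class G (generate G {y}))"
    using eta_count[OF fin] by blast
  show ?thesis unfolding cnt
  proof
    assume E: "(\<forall>x\<in>carrier G. x \<notin> minus_set G \<longrightarrow> H #> x \<notin> minus_set (G Mod H)) \<and>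
      (\<forall>x\<in>carrier G. \<forall>y\<in>carrier G. x \<notin> minus_set G \<longrightarrow> y \<notin> minus_set G \<longrightarrow>
         subgroup_conj_class (G Mod H) (generate (G Mod H) {H #> x}) =
           subgroup_conj_class (G Mod H) (generate (G Mod H) {H #> y}) \<longrightarrow>
         subgroup_conj_class G (generate G {x}) = subgroup_conj_class G (generate G {y}))"
    have E2: "\<And>x y. x \<in> carrier G \<Longrightarrow> y \<in> carrier G \<Longrightarrow> x \<notin> minus_set G \<Longrightarrow> y \<notin> minus_set G \<Longrightarrow>
         subgroup_conj_class (G Mod H) (generate (G Mod H) {H #> x}) =
           subgroup_conj_class (G Mod H) (generate (G Mod H) {H #> y}) \<Longrightarrow>
         subgroup_conj_class G (generate G {x}) = subgroup_conj_class G (generate G {y})"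
      using E by blast
    have c: "\<forall>x \<in> carrier G - minus_set G. \<forall>y \<in> (x <# H) - minus_set G. conj_to_generator G y x"
    proof (intro ballI)
      fix x y assume x: "x \<in> carrier G - minus_set G" and y: "y \<in> (x <# H) - minus_set G"
      have xc: "x \<in> carrier G" using x by auto
      have yx: "y \<in> H #> x" using y lcos_eq[OF xc] by auto
      have yc: "y \<in> carrier G" using yx coset_sub[OF xc] by auto
      have "H #> x = H #> y" using pi_eq_iff[OF xc yc] yx by simp
      hence "subgroup_conj_class G (generate G {x}) = subgroup_conj_class G (generate G {y})"
        using E2[OF xc yc] x y by simp
      thus "conj_to_generator G y x" using cg_iff[OF xc yc] by simp
    qed
    show "H \<subseteq> minus_set G
      \<and> minus_set (G Mod H) = {gN \<in> carrier (G Mod H). gN \<subseteq> minus_set G}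
      \<and> (\<forall>x \<in> carrier G - minus_set G. \<forall>y \<in> (x <# H) - minus_set G. conj_to_generator G y x)"
      using a_of_E1 b_iff E c by blast
  next
    assume abc: "H \<subseteq> minus_set G
      \<and> minus_set (G Mod H) = {gN \<in> carrier (G Mod H). gN \<subseteq> minus_set G}
      \<and> (\<forall>x \<in> carrier G - minus_set G. \<forall>y \<in> (x <# H) - minus_set G. conj_to_generator G y x)"
    have E1: "\<forall>x\<in>carrier G. x \<notin> minus_set G \<longrightarrow> H #> x \<notin> minus_set (G Mod H)"
      using abc b_iff by blast
    have E2: "\<forall>x\<in>carrier G. \<forall>y\<in>carrier G. x \<notin> minus_set G \<longrightarrow> y \<notin> minus_set G \<longrightarrow>
         subgroup_conj_class (G Mod H) (generate (G Mod H) {H #> x}) =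
           subgroup_conj_class (G Mod H) (generate (G Mod H) {H #> y}) \<longrightarrow>
         subgroup_conj_class G (generate G {x}) = subgroup_conj_class G (generate G {y})"
    proof (intro ballI impI)
      fix x y assume x: "x \<in> carrier G" "x \<notin> minus_set G" and y: "y \<in> carrier G" "y \<notin> minus_set G"
        and eqQ: "subgroup_conj_class (G Mod H) (generate (G Mod H) {H #> x}) =
           subgroup_conj_class (G Mod H) (generate (G Mod H) {H #> y})"
      have gxs: "generate (G Mod H) {H #> x} \<subseteq> carrier (G Mod H)" using Q.generate_incl pi_carrier[OF x(1)] by auto
      have gys: "generate (G Mod H) {H #> y} \<subseteq> carrier (G Mod H)" using Q.generate_incl pi_carrier[OF y(1)] by auto
      obtain Gq where Gq: "Gq \<in> carrier (G Mod H)"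
        "generate (G Mod H) {H #> y} = cj (G Mod H) Gq (generate (G Mod H) {H #> x})"
        using Q.cls_eq_iff[OF gxs gys] eqQ by auto
      obtain g where g: "g \<in> carrier G" "Gq = H #> g" using Gq(1) unfolding carrier_FactGroup by auto
      define x' where "x' = g \<otimes> x \<otimes> inv g"
      have x'c: "x' \<in> carrier G" using g x x'_def by simp
      have "(H #> g) \<otimes>\<^bsub>G Mod H\<^esub> (H #> x) \<otimes>\<^bsub>G Mod H\<^esub> inv\<^bsub>G Mod H\<^esub> (H #> g) = H #> x'"
      proof -
        have "H #> x' = (H #> (g \<otimes> x)) \<otimes>\<^bsub>G Mod H\<^esub> (H #> inv g)"
          unfolding x'_def using g x by (intro pi_mult) auto
        also have "H #> (g \<otimes> x) = (H #> g) \<otimes>\<^bsub>G Mod H\<^esub> (H #> x)" using g x by (intro pi_mult) auto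
        also have "H #> inv g = inv\<^bsub>G Mod H\<^esub> (H #> g)" using g by (intro pi_inv)
        finally show ?thesis by simp
      qed
      hence gy: "generate (G Mod H) {H #> y} = generate (G Mod H) {H #> x'}"
        using Gq g Q.cj_generate[of "H #> g" "H #> x"] pi_carrier x(1) by simp
      have gx': "generate G {x'} = cj G g (generate G {x})" using cj_generate g x x'_def by simp
      have x'nm: "x' \<notin> minus_set G"
        using notminus_iff[OF x'c] notminus_iff[OF x(1)] x(2) gx' max_cj g(1) by simp
      have gxs': "generate G {x} \<subseteq> carrier G" using x(1) generate_incl by auto
      have gx's: "generate G {x'} \<subseteq> carrier G" using x'c generate_incl by auto
      have cls1: "subgroup_conj_class G (generate G {x}) = subgroup_conj_class G (generate G {x'})"
        using cls_eq_iff[OF gxs' gx's] gx' g(1) by auto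
      obtain z where z: "z \<in> carrier G" "generate G {z} = generate G {y}" "H #> z = H #> x'"
        using lemma_G[OF fin y(1) pi_carrier[OF x'c]] gy by auto
      have znm: "z \<notin> minus_set G" using notminus_iff[OF z(1)] notminus_iff[OF y(1)] y(2) z(2) by simp
      have "x' \<in> H #> z" using pi_eq_iff[OF z(1) x'c] z(3) by simp
      hence "x' \<in> z <# H" using lcos_eq[OF z(1)] by simp
      hence "conj_to_generator G x' z" using abc z(1) znm x'nm by blast
      hence "subgroup_conj_class G (generate G {z}) = subgroup_conj_class G (generate G {x'})"
        using cg_iff[OF z(1) x'c] by simp
      thus "subgroup_conj_class G (generate G {x}) = subgroup_conj_class G (generate G {y})"
        using cls1 z(2) by simp
    qed
    show "(\<forall>x\<in>carrier G. x \<notin> minus_set G \<longrightarrow> H #> x \<notin> minus_set (G Mod H)) \<and>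
      (\<forall>x\<in>carrier G. \<forall>y\<in>carrier G. x \<notin> minus_set G \<longrightarrow> y \<notin> minus_set G \<longrightarrow>
         subgroup_conj_class (G Mod H) (generate (G Mod H) {H #> x}) =
           subgroup_conj_class (G Mod H) (generate (G Mod H) {H #> y}) \<longrightarrow>
         subgroup_conj_class G (generate G {x}) = subgroup_conj_class G (generate G {y}))"
      using E1 E2 by blast
  qed
qed


lemma part3:
  assumes p: "Factorial_Ring.prime (p::nat)" and ord: "order G = p ^ k"
    and eq: "eta (G Mod H) = eta G"
  shows "union_of_cosets G H (minus_set G)"
proof -
  interpret Q: group "G Mod H" by (rule Q_group)
  have abc: "H \<subseteq> minus_set G"
      "minus_set (G Mod H) = {gN \<in> carrier (G Mod H). gN \<subseteq> minus_set G}"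
    using part2 eq by blast+
  have E1: "\<And>x. x \<in> carrier G \<Longrightarrow> x \<notin> minus_set G \<Longrightarrow> H #> x \<notin> minus_set (G Mod H)"
    using abc(2) b_iff by blast
  have "\<forall>x\<in>minus_set G. x <# H \<subseteq> minus_set G"
  proof (intro ballI subsetI)
    fix x y assume x: "x \<in> minus_set G" and y: "y \<in> x <# H"
    have xc: "x \<in> carrier G" using x unfolding minus_set_def by auto
    show "y \<in> minus_set G"
    proof (rule ccontr)
      assume ynm: "y \<notin> minus_set G"
      have yx: "y \<in> H #> x" using y lcos_eq[OF xc] by auto
      have yc: "y \<in> carrier G" using yx coset_sub[OF xc] by auto
      have hxy: "H #> x = H #> y" using pi_eq_iff[OF xc yc] yx by simp
      have mxq: "max_cyclic (G Mod H) (generate (G Mod H) {H #> x})"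
        using E1[OF yc ynm] hxy Q.notminus_iff pi_carrier[OF xc] by simp
      obtain w where w: "w \<in> carrier G" "max_cyclic G (generate G {w})" "x \<in> generate G {w}"
        using exists_max[OF fin xc] by auto
      have wnm: "w \<notin> minus_set G" using w notminus_iff by simp
      obtain kk :: int where kk: "x = w [^] kk" using w(3) generate_pow[OF w(1)] by auto
      have dw: "int (ord w) dvd int p ^ k"
      proof -
        have "ord w dvd order G" using ord_dvd_group_order[OF w(1)] .
        hence "ord w dvd p ^ k" using ord by simp
        hence "int (ord w) dvd int (p ^ k)" by (simp only: int_dvd_int_iff)
        thus ?thesis by (simp only: of_nat_power)
      qed
      have pint: "Factorial_Ring.prime (int p)" using p by simp
      have pk: "int p dvd kk"
      proof (rule ccontr)
        assume "\<not> int p dvd kk"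
        hence "coprime (int p) kk" using prime_imp_coprime[OF pint] by blast
        hence "coprime kk (int p ^ k)" by (simp add: coprime_commute)
        hence "coprime kk (int (ord w))" using coprime_divisors[OF dvd_refl dw] by blast
        hence "generate G {x} = generate G {w}" using gen_coprime[OF w(1)] kk by simp
        hence "x \<notin> minus_set G" using notminus_iff[OF xc] notminus_iff[OF w(1)] wnm by simp
        thus False using x by simp
      qed
      then obtain l where l: "kk = int p * l" by (auto elim: dvdE)
      define wp where "wp = w [^] (int p)"
      have wpc: "wp \<in> carrier G" using w(1) wp_def by simp
      have xwp: "x = wp [^] l" using kk l w(1) wp_def by (simp add: int_pow_pow)
      have s1: "generate (G Mod H) {H #> x} \<subseteq> generate (G Mod H) {H #> wp}"
      proof -
        have "H #> x = (H #> wp) [^]\<^bsub>G Mod H\<^esub> l" using xwp pi_pow[OF wpc] by simp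
        hence "H #> x \<in> generate (G Mod H) {H #> wp}" using Q.generate_pow[OF pi_carrier[OF wpc]] by auto
        thus ?thesis by (intro Q.generate_subgroup_incl Q.generate_is_subgroup) (auto simp: pi_carrier wpc)
      qed
      have s2: "generate (G Mod H) {H #> wp} \<subseteq> generate (G Mod H) {H #> w}"
      proof -
        have "H #> wp = (H #> w) [^]\<^bsub>G Mod H\<^esub> (int p)" using wp_def pi_pow[OF w(1)] by simp
        hence "H #> wp \<in> generate (G Mod H) {H #> w}" using Q.generate_pow[OF pi_carrier[OF w(1)]] by auto
        thus ?thesis by (intro Q.generate_subgroup_incl Q.generate_is_subgroup) (auto simp: pi_carrier w(1))
      qed
      have cycw: "cyclic_subgroup (G Mod H) (generate (G Mod H) {H #> w})"
        unfolding cyclic_subgroup_def using pi_carrier[OF w(1)] by auto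
      have "generate (G Mod H) {H #> x} = generate (G Mod H) {H #> w}"
        using mxq s1 s2 cycw unfolding max_cyclic_def by blast
      hence "H #> w \<in> generate (G Mod H) {H #> wp}"
        using s1 generate.incl[of "H #> w" "{H #> w}" "G Mod H"] by auto
      then obtain i :: int where i: "H #> w = (H #> wp) [^]\<^bsub>G Mod H\<^esub> i"
        using Q.generate_pow[OF pi_carrier[OF wpc]] by auto
      hence "H #> w = H #> (w [^] (int p * i))" using pi_pow[OF wpc] wp_def w(1) by (simp add: int_pow_pow)
      hence "w [^] (int p * i) \<in> H #> w" using pi_eq_iff[OF w(1)] w(1) by simp
      hence "w [^] (int p * i) \<otimes> inv w \<in> H" using rcos_module_imp[OF is_group w(1)] by blast
      moreover have "w [^] (int p * i) \<otimes> inv w = w [^] (int p * i - 1)"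
        using w(1) int_pow_diff[of w "int p * i" 1] by simp
      ultimately have hw: "w [^] (int p * i - 1) \<in> H" by simp
      define oq where "oq = group.ord (G Mod H) (H #> w)"
      have "(H #> w) [^]\<^bsub>G Mod H\<^esub> (int p * i - 1) = \<one>\<^bsub>G Mod H\<^esub>"
      proof -
        have "H #> (w [^] (int p * i - 1)) = H" using pi_one_iff[of "w [^] (int p * i - 1)"] hw w(1) by simp
        thus ?thesis using pi_pow[OF w(1), of "int p * i - 1"] by simp
      qed
      hence d1: "int oq dvd int p * i - 1" using Q.int_pow_eq_id[OF pi_carrier[OF w(1)]] oq_def by simp
      have "(H #> w) [^]\<^bsub>G Mod H\<^esub> (int (ord w)) = \<one>\<^bsub>G Mod H\<^esub>"
      proof -
        have "w [^] (int (ord w)) = \<one>" using int_pow_eq_id[OF w(1)] by simp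
        hence "H #> (w [^] (int (ord w))) = H"
          using pi_one_iff[of "\<one>"] subgroup.one_closed[OF subgroup_axioms] by simp
        thus ?thesis using pi_pow[OF w(1), of "int (ord w)"] by simp
      qed
      hence d2: "int oq dvd int (ord w)" using Q.int_pow_eq_id[OF pi_carrier[OF w(1)]] oq_def by simp
      have cpo: "coprime (int oq) (int p)"
      proof (rule coprimeI)
        fix c assume c: "c dvd int oq" "c dvd int p"
        have "c dvd int p * i" using c(2) by simp
        moreover have "c dvd int p * i - 1" using c(1) d1 dvd_trans by blast
        ultimately have "c dvd int p * i - (int p * i - 1)" by (rule dvd_diff)
        thus "is_unit c" by simp
      qed
      hence "coprime (int oq) (int p ^ k)" by simp
      moreover have "int oq dvd int p ^ k" using d2 dw dvd_trans by blast
      ultimately have "is_unit (int oq)" using coprime_common_divisor dvd_refl by blast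
      hence "oq = 1" by simp
      hence "H #> w = \<one>\<^bsub>G Mod H\<^esub>" using Q.ord_eq_1[OF pi_carrier[OF w(1)]] oq_def by simp
      hence "w \<in> H" using pi_one_iff w(1) by simp
      thus False using abc(1) wnm by auto
    qed
  qed
  thus ?thesis using uc_iff unfolding minus_set_def by auto
qed


lemma uc_elem:
  assumes uc: "union_of_cosets G H (minus_set G)" and x: "x \<in> minus_set G" and y: "y \<in> x <# H"
  shows "y \<in> minus_set G"
  using uc uc_iff x y by blast

lemma part4:
  "(eta (G Mod H) = eta G \<and> union_of_cosets G H (minus_set G)) \<longleftrightarrow>
     (\<forall>x \<in> carrier G - minus_set G. \<forall>y \<in> x <# H. conj_to_generator G y x)"
proof
  assume A: "eta (G Mod H) = eta G \<and> union_of_cosets G H (minus_set G)"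
  have c: "\<forall>x \<in> carrier G - minus_set G. \<forall>y \<in> (x <# H) - minus_set G. conj_to_generator G y x"
    using part2 A by blast
  show "\<forall>x \<in> carrier G - minus_set G. \<forall>y \<in> x <# H. conj_to_generator G y x"
  proof (intro ballI)
    fix x y assume x: "x \<in> carrier G - minus_set G" and y: "y \<in> x <# H"
    have xc: "x \<in> carrier G" using x by auto
    have yx: "y \<in> H #> x" using y lcos_eq[OF xc] by auto
    have yc: "y \<in> carrier G" using yx coset_sub[OF xc] by auto
    have hxy: "H #> x = H #> y" using pi_eq_iff[OF xc yc] yx by simp
    have "y \<notin> minus_set G"
    proof
      assume ym: "y \<in> minus_set G"
      have "x \<in> H #> y" using hxy mem_own_coset[OF xc] by simp
      hence "x \<in> y <# H" using lcos_eq[OF yc] by simp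
      hence "x \<in> minus_set G" using uc_elem A ym by blast
      thus False using x by simp
    qed
    thus "conj_to_generator G y x" using c x y by blast
  qed
next
  assume c': "\<forall>x \<in> carrier G - minus_set G. \<forall>y \<in> x <# H. conj_to_generator G y x"
  interpret Q: group "G Mod H" by (rule Q_group)
  have uc'': "\<forall>x\<in>minus_set G. x <# H \<subseteq> minus_set G"
  proof (intro ballI subsetI)
    fix x y assume x: "x \<in> minus_set G" and y: "y \<in> x <# H"
    have xc: "x \<in> carrier G" using x unfolding minus_set_def by auto
    have yx: "y \<in> H #> x" using y lcos_eq[OF xc] by auto
    have yc: "y \<in> carrier G" using yx coset_sub[OF xc] by auto
    have hxy: "H #> x = H #> y" using pi_eq_iff[OF xc yc] yx by simp
    show "y \<in> minus_set G"
    proof (rule ccontr)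
      assume ynm: "y \<notin> minus_set G"
      have "x \<in> H #> y" using hxy mem_own_coset[OF xc] by simp
      hence "x \<in> y <# H" using lcos_eq[OF yc] by simp
      hence "conj_to_generator G x y" using c' yc ynm by blast
      hence "x \<notin> minus_set G" using notminus_conj[OF yc ynm xc] by simp
      thus False using x by simp
    qed
  qed
  hence uc: "union_of_cosets G H (minus_set G)" using uc_iff unfolding minus_set_def by auto
  have a: "H \<subseteq> minus_set G"
  proof
    fix n assume n: "n \<in> H"
    have nc: "n \<in> carrier G" using n subgroup.subset[OF subgroup_axioms] by auto
    show "n \<in> minus_set G"
    proof (rule ccontr)
      assume nnm: "n \<notin> minus_set G"
      have "n <# H = H" using lcos_eq[OF nc] pi_one_iff[OF nc] n by simp
      hence "\<one> \<in> n <# H" using subgroup.one_closed[OF subgroup_axioms] by simp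
      hence "conj_to_generator G \<one> n" using c' nc nnm by blast
      hence "\<one> \<notin> minus_set G" using notminus_conj[OF nc nnm] by simp
      hence "carrier G = {\<one>}" using max_trivial notminus_iff by simp
      moreover have "\<one> \<in> H" using subgroup.one_closed[OF subgroup_axioms] .
      ultimately have "H = carrier G" using subgroup.subset[OF subgroup_axioms] by auto
      thus False using hprop by simp
    qed
  qed
  have E1: "\<forall>x\<in>carrier G. x \<notin> minus_set G \<longrightarrow> H #> x \<notin> minus_set (G Mod H)"
  proof (intro ballI impI)
    fix x assume xc: "x \<in> carrier G" and xnm: "x \<notin> minus_set G"
    show "H #> x \<notin> minus_set (G Mod H)"
    proof
      assume "H #> x \<in> minus_set (G Mod H)"
      hence "\<not> max_cyclic (G Mod H) (generate (G Mod H) {H #> x})"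
        using Q.notminus_iff[OF pi_carrier[OF xc]] by blast
      moreover have "cyclic_subgroup (G Mod H) (generate (G Mod H) {H #> x})"
        unfolding cyclic_subgroup_def using pi_carrier[OF xc] by auto
      ultimately obtain D where D: "cyclic_subgroup (G Mod H) D" "generate (G Mod H) {H #> x} \<subset> D"
        unfolding max_cyclic_def by auto
      obtain Y where Y: "Y \<in> carrier (G Mod H)" "D = generate (G Mod H) {Y}"
        using D(1) unfolding cyclic_subgroup_def by auto
      obtain g where g: "g \<in> carrier G" "Y = H #> g" using Y(1) unfolding carrier_FactGroup by auto
      obtain w where w: "w \<in> carrier G" "max_cyclic G (generate G {w})" "g \<in> generate G {w}"
        using exists_max[OF fin g(1)] by auto
      have "generate G {g} \<subseteq> generate G {w}"
        using w by (intro generate_subgroup_incl generate_is_subgroup) auto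
      hence "(\<lambda>a. H #> a) ` generate G {g} \<subseteq> (\<lambda>a. H #> a) ` generate G {w}" by (rule image_mono)
      hence Dw: "D \<subseteq> generate (G Mod H) {H #> w}" using pi_gen g w(1) Y by simp
      have "H #> x \<in> D" using D(2) generate.incl[of "H #> x" "{H #> x}" "G Mod H"] by auto
      hence "H #> x \<in> generate (G Mod H) {H #> w}" using Dw by auto
      then obtain l :: int where "H #> x = (H #> w) [^]\<^bsub>G Mod H\<^esub> l"
        using Q.generate_pow[OF pi_carrier[OF w(1)]] by auto
      hence hxl: "H #> x = H #> (w [^] l)" using pi_pow[OF w(1)] by simp
      have wlc: "w [^] l \<in> carrier G" using w(1) by simp
      have "x \<in> H #> (w [^] l)" using pi_eq_iff[OF wlc xc] hxl by simp
      hence xwl: "x \<in> (w [^] l) <# H" using lcos_eq[OF wlc] by simp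
      have wlnm: "w [^] l \<notin> minus_set G"
      proof
        assume "w [^] l \<in> minus_set G"
        hence "x \<in> minus_set G" using uc'' xwl by blast
        thus False using xnm by simp
      qed
      hence mwl: "max_cyclic G (generate G {w [^] l})" using notminus_iff[OF wlc] by simp
      have "generate G {w [^] l} \<subseteq> generate G {w}"
        using w(1) by (intro generate_subgroup_incl generate_is_subgroup) (auto simp: generate_pow)
      moreover have "cyclic_subgroup G (generate G {w})" unfolding cyclic_subgroup_def using w(1) by auto
      ultimately have "generate G {w [^] l} = generate G {w}" using mwl unfolding max_cyclic_def by blast
      hence "w \<in> generate G {w [^] l}" using generate.incl[of w "{w}" G] by auto
      hence "H #> w \<in> (\<lambda>a. H #> a) ` generate G {w [^] l}" by auto
      hence "H #> w \<in> generate (G Mod H) {H #> x}" using pi_gen[OF wlc] hxl by simp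
      hence "generate (G Mod H) {H #> w} \<subseteq> generate (G Mod H) {H #> x}"
        by (intro Q.generate_subgroup_incl Q.generate_is_subgroup) (auto simp: pi_carrier xc)
      thus False using D(2) Dw by auto
    qed
  qed
  have b: "minus_set (G Mod H) = {gN \<in> carrier (G Mod H). gN \<subseteq> minus_set G}" using E1 b_iff by blast
  have "eta (G Mod H) = eta G" using part2 a b c' by blast
  thus "eta (G Mod H) = eta G \<and> union_of_cosets G H (minus_set G)" using uc by simp
qed

lemma part5:
  assumes eq: "eta (G Mod H) = eta G" and uc: "union_of_cosets G H (minus_set G)"
  shows "minus_set G <#> H = minus_set G
          \<and> minus_set (G Mod H) = (\<lambda>s. s <# H) ` (minus_set G <#> H)"
proof -
  have b: "minus_set (G Mod H) = {gN \<in> carrier (G Mod H). gN \<subseteq> minus_set G}" using part2 eq by blast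
  have m1: "minus_set G <#> H = minus_set G"
    unfolding set_mult_def
  proof (intro equalityI subsetI)
    fix z assume "z \<in> (\<Union>h\<in>minus_set G. \<Union>k\<in>H. {h \<otimes> k})"
    then obtain h k where hk: "h \<in> minus_set G" "k \<in> H" "z = h \<otimes> k" by auto
    have "z \<in> h <# H" using hk unfolding l_coset_def by auto
    thus "z \<in> minus_set G" using uc_elem[OF uc hk(1)] by simp
  next
    fix z assume z: "z \<in> minus_set G"
    hence "z \<in> carrier G" unfolding minus_set_def by auto
    hence "z = z \<otimes> \<one>" by simp
    thus "z \<in> (\<Union>h\<in>minus_set G. \<Union>k\<in>H. {h \<otimes> k})"
      using z subgroup.one_closed[OF subgroup_axioms] by blast
  qed
  have m2: "minus_set (G Mod H) = (\<lambda>s. s <# H) ` minus_set G"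
    unfolding b
  proof (intro equalityI subsetI)
    fix Xc assume "Xc \<in> {gN \<in> carrier (G Mod H). gN \<subseteq> minus_set G}"
    hence Xc: "Xc \<in> carrier (G Mod H)" "Xc \<subseteq> minus_set G" by auto
    obtain g where g: "g \<in> carrier G" "Xc = H #> g" using Xc(1) unfolding carrier_FactGroup by auto
    have "g \<in> minus_set G" using Xc(2) g mem_own_coset by auto
    moreover have "Xc = g <# H" using g lcos_eq by simp
    ultimately show "Xc \<in> (\<lambda>s. s <# H) ` minus_set G" by auto
  next
    fix Xc assume "Xc \<in> (\<lambda>s. s <# H) ` minus_set G"
    then obtain s where s: "s \<in> minus_set G" "Xc = s <# H" by auto
    have sc: "s \<in> carrier G" using s unfolding minus_set_def by auto
    have "Xc \<in> carrier (G Mod H)" using s(2) lcos_eq[OF sc] pi_carrier[OF sc] by simp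
    moreover have "Xc \<subseteq> minus_set G" using s uc_elem[OF uc] by blast
    ultimately show "Xc \<in> {gN \<in> carrier (G Mod H). gN \<subseteq> minus_set G}" by auto
  qed
  show ?thesis using m1 m2 by simp
qed

end
end

theorem theorem4p1:
  fixes G (structure) and N :: "'a set"
  assumes "group G" and "finite (carrier G)"
    and "N \<lhd> G" and "N \<noteq> carrier G"
  shows
    "eta (G Mod N) \<le> eta G
     \<and> (eta (G Mod N) = eta G \<longleftrightarrow>
          (N \<subseteq> minus_set G
           \<and> minus_set (G Mod N) = {gN \<in> carrier (G Mod N). gN \<subseteq> minus_set G}
           \<and> (\<forall>x \<in> carrier G - minus_set G. \<forall>y \<in> (x <# N) - minus_set G.
                 conj_to_generator G y x)))
     \<and> ((\<exists>p k. Factorial_Ring.prime (p::nat) \<and> order G = p ^ k) \<and> eta (G Mod N) = eta G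
          \<longrightarrow> union_of_cosets G N (minus_set G))
     \<and> ((eta (G Mod N) = eta G \<and> union_of_cosets G N (minus_set G)) \<longleftrightarrow>
          (\<forall>x \<in> carrier G - minus_set G. \<forall>y \<in> x <# N. conj_to_generator G y x))
     \<and> (eta (G Mod N) = eta G \<and> union_of_cosets G N (minus_set G) \<longrightarrow>
          minus_set G <#> N = minus_set G
          \<and> minus_set (G Mod N) = (\<lambda>s. s <# N) ` (minus_set G <#> N))"
  proof -
  interpret normal N G by (rule assms(3))
  have p1: "eta (G Mod N) \<le> eta G" using eta_count[OF assms(2)] by blast
  have p2: "eta (G Mod N) = eta G \<longleftrightarrow>
          (N \<subseteq> minus_set G
           \<and> minus_set (G Mod N) = {gN \<in> carrier (G Mod N). gN \<subseteq> minus_set G}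
           \<and> (\<forall>x \<in> carrier G - minus_set G. \<forall>y \<in> (x <# N) - minus_set G.
                 conj_to_generator G y x))"
    using part2[OF assms(2) assms(4)] .
  have p3: "(\<exists>p k. Factorial_Ring.prime (p::nat) \<and> order G = p ^ k) \<and> eta (G Mod N) = eta G
          \<longrightarrow> union_of_cosets G N (minus_set G)"
    using part3[OF assms(2) assms(4)] by blast
  have p4: "(eta (G Mod N) = eta G \<and> union_of_cosets G N (minus_set G)) \<longleftrightarrow>
          (\<forall>x \<in> carrier G - minus_set G. \<forall>y \<in> x <# N. conj_to_generator G y x)"
    using part4[OF assms(2) assms(4)] .
  have p5: "eta (G Mod N) = eta G \<and> union_of_cosets G N (minus_set G) \<longrightarrow>
          minus_set G <#> N = minus_set G
          \<and> minus_set (G Mod N) = (\<lambda>s. s <# N) ` (minus_set G <#> N)"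
    using part5[OF assms(2) assms(4)] by blast
  show ?thesis using p1 p2 p3 p4 p5 by blast
qed

end
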